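(* Let $1\leq k\leq n$. (1) Let $X$ be an $(n,k)$ right Gog trapezoid. Among all Gog triangles of size $n$ whose entries with $i-j\leq k-1$ coincide with $X$, there is an entrywise smallest one, and it satisfies $X_{i,j}=j$ for $i\geq j+k$. (2) Let $X$ be an $(n,k)$ left Gog trapezoid. Among all Gog triangles of size $n$ whose entries with $j\leq k$ coincide with $X$, there is an entrywise smallest one, and it satisfies, for $j\geq k$, $$X_{i,j}=\max\big(X_{i,k}+j-k,\ X_{i-1,k}+j-k-1,\ \dots,\ X_{i-j+k,k}\big).$$
   Context: A Gelfand–Tsetlin triangle of size $n$ is an array $X=(X_{i,j})_{n\geq i\geq j\geq 1}$ of positive integers (row $n$ is the top row, row $1$ the bottom) with $X_{i+1,j}\leq X_{i,j}\leq X_{i+1,j+1}$ for all $n-1\geq i\geq j\geq 1$. A Gog triangle of size $n$ is a Gelfand–Tsetlin triangle with strictly increasing rows and top row $X_{n,j}=j$, $1\leq j\leq n$. Triangles are ordered entrywise. An $(n,k)$ right Gog trapezoid is the array $(X_{i,j})_{n\geq i\geq j\geq 1,\ i-j\leq k-1}$ of entries of some Gog triangle of size $n$ lying in its $k$ rightmost SW–NE diagonals; an $(n,k)$ left Gog trapezoid is the array $(X_{i,j})_{n\geq i\geq j\geq 1,\ j\leq k}$ of entries of some Gog triangle of size $n$ lying in its $k$ leftmost NW–SE diagonals. *)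

theory Defs
  imports Main
begin

text \<open>Triangular arrays are functions nat => nat => int; only the entries
 X i j with 1 <= j <= i <= n are meaningful (row n is the top row).\<close>

definition tri_idx :: "nat \<Rightarrow> nat \<Rightarrow> nat \<Rightarrow> bool" where
  "tri_idx n i j \<longleftrightarrow> 1 \<le> j \<and> j \<le> i \<and> i \<le> n"

definition is_GT :: "nat \<Rightarrow> (nat \<Rightarrow> nat \<Rightarrow> int) \<Rightarrow> bool" where
  "is_GT n X \<longleftrightarrow>
     (\<forall>i j. tri_idx n i j \<longrightarrow> X i j \<ge> 1) \<and>
     (\<forall>i j. 1 \<le> j \<and> j \<le> i \<and> i + 1 \<le> n \<longrightarrow>
        X (i+1) j \<le> X i j \<and> X i j \<le> X (i+1) (j+1))"

definition is_Gog :: "nat \<Rightarrow> (nat \<Rightarrow> nat \<Rightarrow> int) \<Rightarrow> bool" where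
  "is_Gog n X \<longleftrightarrow> is_GT n X \<and>
     (\<forall>i j. 1 \<le> j \<and> j < i \<and> i \<le> n \<longrightarrow> X i j < X i (j+1)) \<and>
     (\<forall>j. 1 \<le> j \<and> j \<le> n \<longrightarrow> X n j = int j)"

text \<open>Index set of the k rightmost SW-NE diagonals (i - j <= k - 1)
 and of the k leftmost NW-SE diagonals (j <= k).\<close>

definition right_idx :: "nat \<Rightarrow> nat \<Rightarrow> nat \<Rightarrow> nat \<Rightarrow> bool" where
  "right_idx n k i j \<longleftrightarrow> tri_idx n i j \<and> i - j \<le> k - 1"

definition left_idx :: "nat \<Rightarrow> nat \<Rightarrow> nat \<Rightarrow> nat \<Rightarrow> bool" where
  "left_idx n k i j \<longleftrightarrow> tri_idx n i j \<and> j \<le> k"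

definition agree_on :: "(nat \<Rightarrow> nat \<Rightarrow> bool) \<Rightarrow> (nat \<Rightarrow> nat \<Rightarrow> int) \<Rightarrow> (nat \<Rightarrow> nat \<Rightarrow> int) \<Rightarrow> bool" where
  "agree_on D X Y \<longleftrightarrow> (\<forall>i j. D i j \<longrightarrow> X i j = Y i j)"

definition is_right_Gog_trap :: "nat \<Rightarrow> nat \<Rightarrow> (nat \<Rightarrow> nat \<Rightarrow> int) \<Rightarrow> bool" where
  "is_right_Gog_trap n k X \<longleftrightarrow> (\<exists>G. is_Gog n G \<and> agree_on (right_idx n k) G X)"

definition is_left_Gog_trap :: "nat \<Rightarrow> nat \<Rightarrow> (nat \<Rightarrow> nat \<Rightarrow> int) \<Rightarrow> bool" where
  "is_left_Gog_trap n k X \<longleftrightarrow> (\<exists>G. is_Gog n G \<and> agree_on (left_idx n k) G X)"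

definition tri_le :: "nat \<Rightarrow> (nat \<Rightarrow> nat \<Rightarrow> int) \<Rightarrow> (nat \<Rightarrow> nat \<Rightarrow> int) \<Rightarrow> bool" where
  "tri_le n X Y \<longleftrightarrow> (\<forall>i j. tri_idx n i j \<longrightarrow> X i j \<le> Y i j)"

end

theory Submission
  imports Defs
begin

lemma gog_pos: "is_Gog n G \<Longrightarrow> 1 \<le> j \<Longrightarrow> j \<le> i \<Longrightarrow> i \<le> n \<Longrightarrow> G i j \<ge> 1"
  unfolding is_Gog_def is_GT_def tri_idx_def by blast
lemma gog_le1: "is_Gog n G \<Longrightarrow> 1 \<le> j \<Longrightarrow> j \<le> i \<Longrightarrow> i + 1 \<le> n \<Longrightarrow> G (i+1) j \<le> G i j"
  unfolding is_Gog_def is_GT_def by blast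
lemma gog_le2: "is_Gog n G \<Longrightarrow> 1 \<le> j \<Longrightarrow> j \<le> i \<Longrightarrow> i + 1 \<le> n \<Longrightarrow> G i j \<le> G (i+1) (j+1)"
  unfolding is_Gog_def is_GT_def by blast
lemma gog_strict: "is_Gog n G \<Longrightarrow> 1 \<le> j \<Longrightarrow> j < i \<Longrightarrow> i \<le> n \<Longrightarrow> G i j < G i (j+1)"
  unfolding is_Gog_def by blast
lemma gog_top: "is_Gog n G \<Longrightarrow> 1 \<le> j \<Longrightarrow> j \<le> n \<Longrightarrow> G n j = int j"
  unfolding is_Gog_def by blast

lemma gog_ge_j: "is_Gog n G \<Longrightarrow> 1 \<le> j \<Longrightarrow> j \<le> i \<Longrightarrow> i \<le> n \<Longrightarrow> G i j \<ge> int j"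
proof (induction j)
  case 0 then show ?case by simp
next
  case (Suc j)
  show ?case
  proof (cases "j = 0")
    case True then show ?thesis using gog_pos[OF Suc.prems(1)] Suc.prems by simp
  next
    case False
    then have "G i j \<ge> int j" using Suc by simp
    moreover have "G i j < G i (j+1)" using gog_strict[OF Suc.prems(1), of j i] Suc.prems False by simp
    ultimately show ?thesis by simp
  qed
qed

lemma gog_horiz: "is_Gog n G \<Longrightarrow> 1 \<le> a \<Longrightarrow> a \<le> b \<Longrightarrow> b \<le> i \<Longrightarrow> i \<le> n \<Longrightarrow> G i a + int (b - a) \<le> G i b"
proof (induction b)
  case 0 then show ?case by simp
next
  case (Suc b)
  show ?case
  proof (cases "a = Suc b")
    case True then show ?thesis by simp
  next
    case False
    then have "G i a + int (b - a) \<le> G i b" using Suc by simp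
    moreover have "G i b < G i (b+1)" using gog_strict[OF Suc.prems(1), of b i] Suc.prems False by simp
    ultimately show ?thesis using False Suc.prems by simp
  qed
qed

lemma gog_diag: "is_Gog n G \<Longrightarrow> 1 \<le> a \<Longrightarrow> a + l \<le> i \<Longrightarrow> i \<le> n \<Longrightarrow> G (i - l) a \<le> G i (a + l)"
proof (induction l arbitrary: i)
  case 0 then show ?case by simp
next
  case (Suc l)
  have "G (i - 1 - l) a \<le> G (i - 1) (a + l)" using Suc.IH[of "i-1"] Suc.prems by simp
  moreover have "G (i-1) (a+l) \<le> G (i - 1 + 1) (a + l + 1)"
    using gog_le2[OF Suc.prems(1), of "a+l" "i-1"] Suc.prems by simp
  moreover have "i - 1 + 1 = i" using Suc.prems by simp
  moreover have "i - 1 - l = i - Suc l" by simp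
  ultimately show ?case by simp
qed

lemma gog_path: "is_Gog n G \<Longrightarrow> 1 \<le> k \<Longrightarrow> l \<le> j - k \<Longrightarrow> k \<le> j \<Longrightarrow> j \<le> i \<Longrightarrow> i \<le> n
   \<Longrightarrow> G (i - l) k + int (j - k - l) \<le> G i j"
proof -
  assume a: "is_Gog n G" "1 \<le> k" "l \<le> j - k" "k \<le> j" "j \<le> i" "i \<le> n"
  have "G (i - l) k + int (j - l - k) \<le> G (i - l) (j - l)"
    using gog_horiz[OF a(1), of k "j-l" "i-l"] a by simp
  moreover have "G (i - l) (j - l) \<le> G i (j - l + l)"
    using gog_diag[OF a(1), of "j-l" l i] a by simp
  ultimately show ?thesis using a by (simp add: algebra_simps)
qed

lemma gog_upper: "is_Gog n G \<Longrightarrow> 1 \<le> k \<Longrightarrow> k + l \<le> n \<Longrightarrow> G (n - l) k \<le> int (k + l)"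
proof -
  assume a: "is_Gog n G" "1 \<le> k" "k + l \<le> n"
  have "G (n - l) k \<le> G n (k + l)" using gog_diag[OF a(1), of k l n] a by simp
  also have "\<dots> = int (k + l)" using gog_top[OF a(1), of "k+l"] a by simp
  finally show ?thesis .
qed

definition FF :: "(nat\<Rightarrow>nat\<Rightarrow>int) \<Rightarrow> nat \<Rightarrow> nat \<Rightarrow> nat \<Rightarrow> int" where
  "FF G k i j = Max ((\<lambda>l. G (i-l) k + int (j-k-l)) ` {0..j-k})"

lemma FF_ge: "l \<le> j - k \<Longrightarrow> G (i-l) k + int (j-k-l) \<le> FF G k i j"
  unfolding FF_def by (intro Max_ge) auto

lemma FF_attain: "\<exists>l \<le> j - k. FF G k i j = G (i-l) k + int (j-k-l)"
proof -
  have "FF G k i j \<in> (\<lambda>l. G (i-l) k + int (j-k-l)) ` {0..j-k}"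
    unfolding FF_def by (intro Max_in) auto
  then show ?thesis by auto
qed

theorem mainTheorem6:
  fixes n k :: nat
  assumes "1 \<le> k" and "k \<le> n"
  shows
   "(\<forall>X. is_right_Gog_trap n k X \<longrightarrow>
       (\<exists>M. is_Gog n M \<and> agree_on (right_idx n k) M X \<and>
          (\<forall>G. is_Gog n G \<and> agree_on (right_idx n k) G X \<longrightarrow> tri_le n M G) \<and>
          (\<forall>i j. tri_idx n i j \<and> i \<ge> j + k \<longrightarrow> M i j = int j)))
    \<and>
    (\<forall>X. is_left_Gog_trap n k X \<longrightarrow>
       (\<exists>M. is_Gog n M \<and> agree_on (left_idx n k) M X \<and>
          (\<forall>G. is_Gog n G \<and> agree_on (left_idx n k) G X \<longrightarrow> tri_le n M G) \<and>
          (\<forall>i j. tri_idx n i j \<and> j \<ge> k \<longrightarrow>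
             M i j = Max ((\<lambda>l. M (i - l) k + int (j - k - l)) ` {0..j - k}))))"
proof (intro conjI allI impI)
  fix X assume "is_right_Gog_trap n k X"
  then obtain G where G: "is_Gog n G" and GX: "agree_on (right_idx n k) G X"
    unfolding is_right_Gog_trap_def by blast
  define M where "M i j = (if i \<ge> j + k then int j else G i j)" for i j
  have agr: "agree_on (right_idx n k) M X"
    using GX assms unfolding agree_on_def right_idx_def tri_idx_def M_def by auto
  have gog: "is_Gog n M"
    unfolding is_Gog_def is_GT_def
  proof (intro conjI allI impI)
    fix i j assume "tri_idx n i j" then show "M i j \<ge> 1"
      using gog_pos[OF G] unfolding tri_idx_def M_def by auto
  next
    fix i j assume h: "1 \<le> j \<and> j \<le> i \<and> i + 1 \<le> n"
    show "M (i+1) j \<le> M i j"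
      using h gog_le1[OF G, of j i] gog_ge_j[OF G, of j i] unfolding M_def by auto
    show "M i j \<le> M (i+1) (j+1)"
      using h gog_le2[OF G, of j i] unfolding M_def by auto
  next
    fix i j assume h: "1 \<le> j \<and> j < i \<and> i \<le> n"
    show "M i j < M i (j+1)"
      using h gog_strict[OF G, of j i] gog_ge_j[OF G, of "j+1" i] unfolding M_def by auto
  next
    fix j assume h: "1 \<le> j \<and> j \<le> n"
    show "M n j = int j" using h gog_top[OF G, of j] unfolding M_def by auto
  qed
  show "\<exists>M. is_Gog n M \<and> agree_on (right_idx n k) M X \<and>
          (\<forall>G. is_Gog n G \<and> agree_on (right_idx n k) G X \<longrightarrow> tri_le n M G) \<and>
          (\<forall>i j. tri_idx n i j \<and> i \<ge> j + k \<longrightarrow> M i j = int j)"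
  proof (intro exI conjI allI impI)
    show "is_Gog n M" by (rule gog)
    show "agree_on (right_idx n k) M X" by (rule agr)
  next
    fix G' assume h: "is_Gog n G' \<and> agree_on (right_idx n k) G' X"
    show "tri_le n M G'"
      unfolding tri_le_def
    proof (intro allI impI)
      fix i j assume t: "tri_idx n i j"
      show "M i j \<le> G' i j"
      proof (cases "i \<ge> j + k")
        case True then show ?thesis using gog_ge_j[of n G' j i] h t
          unfolding M_def tri_idx_def by auto
      next
        case False
        then have "right_idx n k i j" using t unfolding right_idx_def tri_idx_def by auto
        then show ?thesis using h GX False unfolding agree_on_def M_def by auto
      qed
    qed
  next
    fix i j assume "tri_idx n i j \<and> i \<ge> j + k"
    then show "M i j = int j" unfolding M_def by auto
  qed
next
  fix X assume "is_left_Gog_trap n k X"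
  then obtain G where G: "is_Gog n G" and GX: "agree_on (left_idx n k) G X"
    unfolding is_left_Gog_trap_def by blast
  define M where "M i j = (if j \<le> k then G i j else FF G k i j)" for i j
  have agr: "agree_on (left_idx n k) M X"
    using GX unfolding agree_on_def left_idx_def M_def by auto
  have gog: "is_Gog n M"
    unfolding is_Gog_def is_GT_def
  proof (intro conjI allI impI)
    fix i j assume t: "tri_idx n i j" show "M i j \<ge> 1"
    proof (cases "j \<le> k")
      case True then show ?thesis using t gog_pos[OF G] unfolding tri_idx_def M_def by auto
    next
      case False
      then have "G i k + int (j - k - 0) \<le> FF G k i j" using FF_ge[of 0 j k G i] by simp
      moreover have "G i k \<ge> 1" using t False assms gog_pos[OF G, of k i] unfolding tri_idx_def by auto
      ultimately show ?thesis using False unfolding M_def by auto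
    qed
  next
    fix i j assume h: "1 \<le> j \<and> j \<le> i \<and> i + 1 \<le> n"
    show "M (i+1) j \<le> M i j"
    proof (cases "j \<le> k")
      case True then show ?thesis using h gog_le1[OF G, of j i] unfolding M_def by auto
    next
      case False
      obtain l where l: "l \<le> j - k" "FF G k (i+1) j = G (i+1-l) k + int (j-k-l)"
        using FF_attain by blast
      show ?thesis
      proof (cases "l = 0")
        case True
        have "G (i+1) k \<le> G i k" using gog_le1[OF G, of k i] h False assms by simp
        moreover have "G (i-0) k + int (j-k-0) \<le> FF G k i j" using FF_ge[of 0 j k G i] by simp
        ultimately show ?thesis using l True False unfolding M_def by auto
      next
        case f2: False
        have "G (i-(l-1)) k + int (j-k-(l-1)) \<le> FF G k i j" using FF_ge[of "l-1" j k G i] l by simp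
        moreover have "i - (l-1) = i + 1 - l" using f2 l h False by auto
        moreover have "int (j-k-(l-1)) = int (j-k-l) + 1" using f2 l by auto
        ultimately show ?thesis using l False unfolding M_def by auto
      qed
    qed
    show "M i j \<le> M (i+1) (j+1)"
    proof (cases "j + 1 \<le> k")
      case True then show ?thesis using h gog_le2[OF G, of j i] unfolding M_def by auto
    next
      case False
      show ?thesis
      proof (cases "j = k")
        case True
        have "G (i+1-1) k + int (j+1-k-1) \<le> FF G k (i+1) (j+1)" using FF_ge[of 1 "j+1" k G "i+1"] True by simp
        then show ?thesis using True unfolding M_def by auto
      next
        case f2: False
        obtain l where l: "l \<le> j - k" "FF G k i j = G (i-l) k + int (j-k-l)"
          using FF_attain by blast
        have "G (i+1-(l+1)) k + int (j+1-k-(l+1)) \<le> FF G k (i+1) (j+1)"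
          using FF_ge[of "l+1" "j+1" k G "i+1"] l False f2 by simp
        moreover have "int (j+1-k-(l+1)) = int (j-k-l)" by simp
        ultimately show ?thesis using l False f2 unfolding M_def by auto
      qed
    qed
  next
    fix i j assume h: "1 \<le> j \<and> j < i \<and> i \<le> n"
    show "M i j < M i (j+1)"
    proof (cases "j + 1 \<le> k")
      case True then show ?thesis using h gog_strict[OF G, of j i] unfolding M_def by auto
    next
      case False
      show ?thesis
      proof (cases "j = k")
        case True
        have "G (i-0) k + int (j+1-k-0) \<le> FF G k i (j+1)" using FF_ge[of 0 "j+1" k G i] True by simp
        then show ?thesis using True unfolding M_def by auto
      next
        case f2: False
        obtain l where l: "l \<le> j - k" "FF G k i j = G (i-l) k + int (j-k-l)"
          using FF_attain by blast
        have "G (i-l) k + int (j+1-k-l) \<le> FF G k i (j+1)"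
          using FF_ge[of l "j+1" k G i] l False f2 by simp
        moreover have "int (j+1-k-l) = int (j-k-l) + 1" using l False f2 by auto
        ultimately show ?thesis using l False f2 unfolding M_def by auto
      qed
    qed
  next
    fix j assume h: "1 \<le> j \<and> j \<le> n"
    show "M n j = int j"
    proof (cases "j \<le> k")
      case True then show ?thesis using h gog_top[OF G, of j] unfolding M_def by auto
    next
      case False
      obtain l where l: "l \<le> j - k" "FF G k n j = G (n-l) k + int (j-k-l)"
        using FF_attain by blast
      have "G (n-l) k \<le> int (k + l)" using gog_upper[OF G assms(1), of l] l h False by simp
      moreover have "G (n-0) k + int (j-k-0) \<le> FF G k n j" using FF_ge[of 0 j k G n] by simp
      moreover have "G n k = int k" using gog_top[OF G, of k] assms by simp
      ultimately show ?thesis using l False unfolding M_def by auto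
    qed
  qed
  show "\<exists>M. is_Gog n M \<and> agree_on (left_idx n k) M X \<and>
          (\<forall>G. is_Gog n G \<and> agree_on (left_idx n k) G X \<longrightarrow> tri_le n M G) \<and>
          (\<forall>i j. tri_idx n i j \<and> j \<ge> k \<longrightarrow>
             M i j = Max ((\<lambda>l. M (i - l) k + int (j - k - l)) ` {0..j - k}))"
  proof (intro exI conjI allI impI)
    show "is_Gog n M" by (rule gog)
    show "agree_on (left_idx n k) M X" by (rule agr)
  next
    fix G' assume h: "is_Gog n G' \<and> agree_on (left_idx n k) G' X"
    show "tri_le n M G'"
      unfolding tri_le_def
    proof (intro allI impI)
      fix i j assume t: "tri_idx n i j"
      show "M i j \<le> G' i j"
      proof (cases "j \<le> k")
        case True
        then have "left_idx n k i j" using t unfolding left_idx_def by auto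
        then show ?thesis using h GX True unfolding agree_on_def M_def by auto
      next
        case False
        obtain l where l: "l \<le> j - k" "FF G k i j = G (i-l) k + int (j-k-l)"
          using FF_attain by blast
        have "left_idx n k (i-l) k" using t l False assms unfolding left_idx_def tri_idx_def by auto
        then have "G (i-l) k = G' (i-l) k" using h GX unfolding agree_on_def by auto
        moreover have "G' (i - l) k + int (j - k - l) \<le> G' i j"
          using gog_path[of n G' k l j i] h l t False assms unfolding tri_idx_def by auto
        ultimately show ?thesis using l False unfolding M_def by auto
      qed
    qed
  next
    fix i j assume t: "tri_idx n i j \<and> j \<ge> k"
    have img: "(\<lambda>l. M (i - l) k + int (j - k - l)) ` {0..j - k} = (\<lambda>l. G (i - l) k + int (j - k - l)) ` {0..j - k}"
      unfolding M_def by auto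
    show "M i j = Max ((\<lambda>l. M (i - l) k + int (j - k - l)) ` {0..j - k})"
    proof (cases "j = k")
      case True then show ?thesis unfolding M_def by simp
    next
      case False then show ?thesis unfolding img using t unfolding M_def FF_def by auto
    qed
  qed
qed

end
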